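(* Let $\mathbb{Q}\subset K$ be a totally real Galois extension of finite degree. Then $\overline{N}_{K/\mathbb{Q}}=\mathbb{Q}$.
   Context: $\overline{N}_{K/\mathbb{Q}}$ is the set of all finite sums $\sum_iN_{K/\mathbb{Q}}(a_i)$ with $a_i\in K$, where $N_{K/\mathbb{Q}}$ is the field norm. A number field is totally real if all its embeddings into $\mathbb{C}$ land in $\mathbb{R}$. *)

theory Defs
  imports Complex_Main "Jordan_Normal_Form.Determinant"
begin

text \<open>Number fields are modelled as subfields K of the complex numbers that are
finite-dimensional over the rationals.\<close>

definition is_subfield :: "complex set \<Rightarrow> bool" where
  "is_subfield K \<longleftrightarrow> 0 \<in> K \<and> 1 \<in> K \<and>
     (\<forall>x\<in>K. \<forall>y\<in>K. x + y \<in> K \<and> x * y \<in> K) \<and>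
     (\<forall>x\<in>K. - x \<in> K \<and> inverse x \<in> K)"

definition rat_lin_indep :: "complex list \<Rightarrow> bool" where
  "rat_lin_indep bs \<longleftrightarrow>
     (\<forall>c :: nat \<Rightarrow> rat. (\<Sum>i<length bs. of_rat (c i) * bs ! i) = 0 \<longrightarrow> (\<forall>i<length bs. c i = 0))"

definition rat_span_list :: "complex list \<Rightarrow> complex set" where
  "rat_span_list bs = {(\<Sum>i<length bs. of_rat (c i) * bs ! i) | c :: nat \<Rightarrow> rat. True}"

definition is_rat_basis :: "complex set \<Rightarrow> complex list \<Rightarrow> bool" where
  "is_rat_basis K bs \<longleftrightarrow> set bs \<subseteq> K \<and> rat_lin_indep bs \<and> rat_span_list bs = K"

definition number_field :: "complex set \<Rightarrow> bool" where
  "number_field K \<longleftrightarrow> is_subfield K \<and> (\<exists>bs. is_rat_basis K bs)"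

definition field_embedding :: "complex set \<Rightarrow> (complex \<Rightarrow> complex) \<Rightarrow> bool" where
  "field_embedding K \<sigma> \<longleftrightarrow> \<sigma> 1 = 1 \<and>
     (\<forall>x\<in>K. \<forall>y\<in>K. \<sigma> (x + y) = \<sigma> x + \<sigma> y \<and> \<sigma> (x * y) = \<sigma> x * \<sigma> y)"

definition totally_real :: "complex set \<Rightarrow> bool" where
  "totally_real K \<longleftrightarrow> (\<forall>\<sigma>. field_embedding K \<sigma> \<longrightarrow> \<sigma> ` K \<subseteq> \<real>)"

text \<open>Galois over Q (characteristic 0, so separable automatically): normal, i.e.
every embedding of K into C maps K into K.\<close>
definition galois_over_Q :: "complex set \<Rightarrow> bool" where
  "galois_over_Q K \<longleftrightarrow> (\<forall>\<sigma>. field_embedding K \<sigma> \<longrightarrow> \<sigma> ` K \<subseteq> K)"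

definition mult_matrix :: "complex list \<Rightarrow> complex \<Rightarrow> rat mat" where
  "mult_matrix bs a = (THE M. M \<in> carrier_mat (length bs) (length bs) \<and>
     (\<forall>j<length bs. a * bs ! j = (\<Sum>i<length bs. of_rat (M $$ (i, j)) * bs ! i)))"

text \<open>Field norm N_{K/Q}(a) = det of multiplication by a (independent of the basis).\<close>
definition field_norm :: "complex set \<Rightarrow> complex \<Rightarrow> rat" where
  "field_norm K a = det (mult_matrix (SOME bs. is_rat_basis K bs) a)"

definition norm_sums :: "complex set \<Rightarrow> rat set" where
  "norm_sums K = {(\<Sum>i<m. field_norm K (a i)) | (m :: nat) (a :: nat \<Rightarrow> complex). \<forall>i<m. a i \<in> K}"

end

theory Submission
  imports Defs "Jordan_Normal_Form.Char_Poly" "HOL-Computational_Algebra.Field_as_Ring"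
begin

interpretation ofrp: map_poly_idom_hom "of_rat :: rat \<Rightarrow> complex" ..

definition ev :: "rat poly \<Rightarrow> complex \<Rightarrow> complex" where
  "ev p z = poly (map_poly of_rat p) z"

lemma ev_add[simp]: "ev (p + q) z = ev p z + ev q z"
  unfolding ev_def by (simp add: of_rat_hom.map_poly_hom_add)
lemma ev_mult[simp]: "ev (p * q) z = ev p z * ev q z"
  unfolding ev_def by (simp add: ofrp.hom_mult ofrp.hom_minus)
lemma ev_diff[simp]: "ev (p - q) z = ev p z - ev q z"
  unfolding ev_def by (simp add: ofrp.hom_mult ofrp.hom_minus)
lemma ev_const[simp]: "ev [:c:] z = of_rat c"
  unfolding ev_def by (cases "c = 0") (auto simp: map_poly_pCons)
lemma ev_1[simp]: "ev 1 z = 1"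
  unfolding ev_def by simp
lemma ev_0[simp]: "ev 0 z = 0"
  unfolding ev_def by simp
lemma ev_x[simp]: "ev [:0,1:] z = z"
  unfolding ev_def by simp
lemma ev_smult[simp]: "ev (smult c p) z = of_rat c * ev p z"
  unfolding ev_def by (simp add: of_rat_hom.map_poly_hom_smult)
lemma ev_sum: "ev p z = (\<Sum>i\<le>degree p. of_rat (coeff p i) * z ^ i)"
  unfolding ev_def poly_altdef by (simp add: of_rat_hom.degree_map_poly_hom)
lemma ev_dvd: "q dvd p \<Longrightarrow> ev q z = 0 \<Longrightarrow> ev p z = 0"
  by (auto elim!: dvdE)

definition alg :: "complex \<Rightarrow> bool" where
  "alg z \<longleftrightarrow> (\<exists>p. p \<noteq> 0 \<and> ev p z = 0)"

definition mdeg :: "complex \<Rightarrow> nat" where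
  "mdeg z = (LEAST d. \<exists>p. p \<noteq> 0 \<and> degree p = d \<and> ev p z = 0)"

definition mpol :: "complex \<Rightarrow> rat poly" where
  "mpol z = (SOME p. p \<noteq> 0 \<and> degree p = mdeg z \<and> ev p z = 0 \<and> lead_coeff p = 1)"

lemma mdeg_le: "p \<noteq> 0 \<Longrightarrow> ev p z = 0 \<Longrightarrow> mdeg z \<le> degree p"
  unfolding mdeg_def by (rule Least_le) blast

lemma mdeg_ex: assumes "alg z" shows "\<exists>p. p \<noteq> 0 \<and> degree p = mdeg z \<and> ev p z = 0"
proof -
  from assms obtain p where "p \<noteq> 0 \<and> ev p z = 0" unfolding alg_def by blast
  hence "\<exists>d p. p \<noteq> 0 \<and> degree p = d \<and> ev p z = 0" by blast
  from LeastI_ex[OF this] show ?thesis unfolding mdeg_def .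
qed

lemma mpol: assumes "alg z"
  shows "mpol z \<noteq> 0" "degree (mpol z) = mdeg z" "ev (mpol z) z = 0" "lead_coeff (mpol z) = 1"
proof -
  from mdeg_ex[OF assms] obtain p where p: "p \<noteq> 0" "degree p = mdeg z" "ev p z = 0" by blast
  let ?q = "smult (inverse (lead_coeff p)) p"
  have "lead_coeff p \<noteq> 0" using p(1) by simp
  hence "coeff p (mdeg z) \<noteq> 0" using p(2) by simp
  hence "?q \<noteq> 0 \<and> degree ?q = mdeg z \<and> ev ?q z = 0 \<and> lead_coeff ?q = 1"
    using p by (auto simp: field_simps)
  hence "\<exists>q. q \<noteq> 0 \<and> degree q = mdeg z \<and> ev q z = 0 \<and> lead_coeff q = 1" by blast
  from someI_ex[OF this] show "mpol z \<noteq> 0" "degree (mpol z) = mdeg z" "ev (mpol z) z = 0" "lead_coeff (mpol z) = 1"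
    unfolding mpol_def by auto
qed

lemma mpol_dvd: assumes "alg z" shows "ev p z = 0 \<longleftrightarrow> mpol z dvd p"
proof
  assume "mpol z dvd p" thus "ev p z = 0" using ev_dvd mpol[OF assms] by blast
next
  assume e: "ev p z = 0"
  let ?m = "mpol z"
  have "p = ?m * (p div ?m) + p mod ?m" by simp
  hence "ev p z = ev ?m z * ev (p div ?m) z + ev (p mod ?m) z" by (metis ev_add ev_mult)
  hence r: "ev (p mod ?m) z = 0" using e mpol[OF assms] by simp
  have "p mod ?m = 0"
  proof (rule ccontr)
    assume "p mod ?m \<noteq> 0"
    hence "degree (p mod ?m) < degree ?m" using mpol[OF assms]
      by (metis degree_mod_less' mpol(2) assms)
    with mdeg_le[OF \<open>p mod ?m \<noteq> 0\<close> r] mpol[OF assms] show False by simp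
  qed
  thus "?m dvd p" by (simp add: mod_eq_0_iff_dvd)
qed

lemma mdeg_pos: assumes "alg z" shows "mdeg z \<ge> 1"
proof (rule ccontr)
  assume "\<not> ?thesis"
  hence "degree (mpol z) = 0" using mpol[OF assms] by simp
  then obtain c where c: "mpol z = [:c:]" by (metis degree_eq_zeroE)
  with mpol[OF assms] have "c \<noteq> 0" "of_rat c = (0::complex)" by auto
  thus False by simp
qed

lemma dvd_mpol_cases: assumes "alg z" "g dvd mpol z"
  shows "(ev g z \<noteq> 0 \<and> degree g = 0) \<or> (ev g z = 0 \<and> mpol z dvd g)"
proof -
  let ?m = "mpol z"
  from assms(2) obtain h where h: "?m = g * h" by (auto elim: dvdE)
  have "g \<noteq> 0" "h \<noteq> 0" using h mpol[OF assms(1)] by auto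
  have "ev g z * ev h z = 0" using h mpol[OF assms(1)] by (metis ev_mult)
  show ?thesis
  proof (cases "ev g z = 0")
    case True thus ?thesis using mpol_dvd[OF assms(1)] by simp
  next
    case False
    hence "ev h z = 0" using \<open>ev g z * ev h z = 0\<close> by simp
    hence "mdeg z \<le> degree h" using mdeg_le \<open>h \<noteq> 0\<close> by blast
    moreover have "degree ?m = degree g + degree h" using h \<open>g \<noteq> 0\<close> \<open>h \<noteq> 0\<close> degree_mult_eq by metis
    ultimately have "degree g = 0" using mpol[OF assms(1)] by simp
    thus ?thesis using False by simp
  qed
qed

lemma coprime_mpol_pderiv: assumes "alg z" shows "coprime (mpol z) (pderiv (mpol z))"
proof -
  let ?m = "mpol z" let ?g = "gcd ?m (pderiv ?m)"
  have "pderiv ?m \<noteq> 0" using mdeg_pos[OF assms] mpol[OF assms] by (simp add: pderiv_eq_0_iff)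
  have "degree (pderiv ?m) < degree ?m" using mdeg_pos[OF assms] mpol[OF assms]
    by (simp add: degree_pderiv)
  have "?g dvd ?m" by simp
  from dvd_mpol_cases[OF assms this] show ?thesis
  proof
    assume "ev ?g z \<noteq> 0 \<and> degree ?g = 0"
    moreover have "?g \<noteq> 0" using mpol[OF assms] by simp
    ultimately have "is_unit ?g" by (metis is_unit_iff_degree)
    thus ?thesis by (metis is_unit_gcd)
  next
    assume "ev ?g z = 0 \<and> ?m dvd ?g"
    hence "?m dvd pderiv ?m" by (meson dvd_trans gcd_dvd2)
    hence "degree ?m \<le> degree (pderiv ?m)" using \<open>pderiv ?m \<noteq> 0\<close> by (simp add: dvd_imp_degree_le)
    thus ?thesis using \<open>degree (pderiv ?m) < degree ?m\<close> by simp
  qed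
qed

lemma mpol_sep: fixes x :: complex assumes "alg z" "poly (map_poly of_rat (mpol z)) x = 0"
  shows "poly (pderiv (map_poly of_rat (mpol z))) x \<noteq> 0"
proof -
  let ?m = "mpol z"
  obtain u v where "u * ?m + v * pderiv ?m = gcd ?m (pderiv ?m)"
    using bezout_coefficients_fst_snd by blast
  hence "u * ?m + v * pderiv ?m = 1" using coprime_mpol_pderiv[OF assms(1)] by simp
  hence "ev u x * ev ?m x + ev v x * ev (pderiv ?m) x = 1" by (metis ev_1 ev_add ev_mult)
  moreover have "ev ?m x = 0" using assms(2) unfolding ev_def .
  ultimately have "ev (pderiv ?m) x \<noteq> 0" by auto
  thus ?thesis unfolding ev_def by (simp add: of_rat_hom.map_poly_pderiv)
qed

lemma ev_inverse: assumes "alg z" "ev p z \<noteq> 0" shows "\<exists>q. ev q z * ev p z = 1"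
proof -
  let ?m = "mpol z" let ?g = "gcd p ?m"
  have "?g dvd ?m" by simp
  from dvd_mpol_cases[OF assms(1) this] have "is_unit ?g"
  proof
    assume "ev ?g z \<noteq> 0 \<and> degree ?g = 0"
    moreover have "?g \<noteq> 0" using mpol[OF assms(1)] by simp
    ultimately show "is_unit ?g" by (metis is_unit_iff_degree)
  next
    assume "ev ?g z = 0 \<and> ?m dvd ?g"
    hence "ev p z = 0" using ev_dvd gcd_dvd1 by blast
    thus ?thesis using assms by simp
  qed
  hence "?g = 1" by (metis coprime_imp_gcd_eq_1 is_unit_gcd)
  obtain u v where "u * p + v * ?m = ?g" using bezout_coefficients_fst_snd by blast
  hence "ev u z * ev p z + ev v z * ev ?m z = 1" using \<open>?g = 1\<close> by (metis ev_1 ev_add ev_mult)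
  thus ?thesis using mpol[OF assms(1)] by auto
qed

interpretation Q: vector_space "\<lambda>(q::rat) (z::complex). of_rat q * z"
  by unfold_locales (auto simp: algebra_simps of_rat_add of_rat_mult)

definition pw :: "complex \<Rightarrow> nat \<Rightarrow> complex set" where
  "pw z d = (\<lambda>j. z ^ j) ` {..<d}"

lemma ev_monom_sum: "ev (\<Sum>j<d. monom (f j) j) z = (\<Sum>j<d. of_rat (f j) * z ^ j)"
proof (induction d)
  case 0 then show ?case by simp
next
  case (Suc d)
  have "ev (monom (f d) d) z = of_rat (f d) * z ^ d"
    unfolding ev_def by (simp add: map_poly_monom poly_monom)
  then show ?case using Suc by simp
qed

lemma coeff_monom_sum: "coeff (\<Sum>j<d. monom (f j) j) i = (if i < d then f i else 0)"
  by (simp add: coeff_sum coeff_monom)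

lemma degree_monom_sum: "degree (\<Sum>j<d. monom (f j) j) < d \<or> (\<Sum>j<d. monom (f j) j) = 0"
proof (cases "(\<Sum>j<d. monom (f j) j) = 0")
  case False
  hence "d > 0" by (cases d) auto
  have "degree (\<Sum>j<d. monom (f j) j) \<le> d - 1"
    by (rule degree_le) (auto simp: coeff_monom_sum)
  thus ?thesis using \<open>d > 0\<close> by auto
qed simp

lemma pw_inj: assumes "alg z" shows "inj_on (\<lambda>j. z ^ j) {..<mdeg z}"
proof (rule inj_onI, rule ccontr)
  fix i j assume ij: "i \<in> {..<mdeg z}" "j \<in> {..<mdeg z}" "z ^ i = z ^ j" "i \<noteq> j"
  { fix a b assume ab: "a < b" "b < mdeg z" "z ^ a = z ^ b"
    let ?p = "monom 1 b - monom (1::rat) a"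
    have "coeff ?p b = 1" using ab by (simp add: coeff_monom)
    hence "?p \<noteq> 0" by (metis coeff_0 zero_neq_one)
    moreover have "degree ?p = b"
      by (rule order.antisym, rule degree_le, use ab in \<open>auto simp: coeff_monom\<close>)
         (metis \<open>coeff ?p b = 1\<close> le_degree zero_neq_one)
    moreover have "ev ?p z = 0" using ab unfolding ev_def by (simp add: map_poly_monom poly_monom ofrp.hom_minus)
    ultimately have False using mdeg_le[of ?p z] ab by auto }
  note * = this
  show False using ij *[of i j] *[of j i] by (cases "i < j") auto
qed

lemma card_pw: assumes "alg z" shows "card (pw z (mdeg z)) = mdeg z"
  unfolding pw_def using card_image[OF pw_inj[OF assms]] by simp

lemma pw_indep: assumes "alg z" shows "Q.independent (pw z (mdeg z))"
proof (rule Q.independent_if_scalars_zero)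
  show "finite (pw z (mdeg z))" unfolding pw_def by simp
next
  fix f x assume s: "(\<Sum>x\<in>pw z (mdeg z). of_rat (f x) * x) = 0" and x: "x \<in> pw z (mdeg z)"
  let ?d = "mdeg z"
  let ?p = "\<Sum>j<?d. monom (f (z ^ j)) j"
  have "(\<Sum>x\<in>pw z ?d. of_rat (f x) * x) = (\<Sum>j<?d. of_rat (f (z^j)) * z ^ j)"
    unfolding pw_def by (subst sum.reindex[OF pw_inj[OF assms]]) simp
  hence "ev ?p z = 0" using s ev_monom_sum by simp
  have "?p = 0"
  proof (rule ccontr)
    assume "?p \<noteq> 0"
    hence "degree ?p < ?d" using degree_monom_sum[of "\<lambda>j. f (z^j)" ?d] by blast
    with mdeg_le[OF \<open>?p \<noteq> 0\<close> \<open>ev ?p z = 0\<close>] show False by simp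
  qed
  from x obtain j where j: "j < ?d" "x = z ^ j" unfolding pw_def by auto
  have "coeff ?p j = f x" using j by (simp add: coeff_monom_sum)
  thus "f x = 0" using \<open>?p = 0\<close> by simp
qed

lemma ev_span_aux: "degree p < d \<Longrightarrow> ev p z \<in> Q.span (pw z d)"
proof -
  assume "degree p < d"
  have "ev p z = (\<Sum>i\<le>degree p. of_rat (coeff p i) * z ^ i)" by (rule ev_sum)
  also have "\<dots> \<in> Q.span (pw z d)"
    by (rule Q.span_sum, rule Q.span_scale, rule Q.span_base, use \<open>degree p < d\<close> in \<open>auto simp: pw_def\<close>)
  finally show ?thesis .
qed

lemma ev_span: assumes "alg z" shows "ev p z \<in> Q.span (pw z (mdeg z))"
proof -
  let ?m = "mpol z"
  have "p = ?m * (p div ?m) + p mod ?m" by simp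
  hence "ev p z = ev ?m z * ev (p div ?m) z + ev (p mod ?m) z" by (metis ev_add ev_mult)
  hence e: "ev p z = ev (p mod ?m) z" using mpol[OF assms] by simp
  show ?thesis
  proof (cases "p mod ?m = 0")
    case True thus ?thesis using e Q.span_zero by simp
  next
    case False
    hence "degree (p mod ?m) < mdeg z" using mpol[OF assms] by (metis degree_mod_less')
    thus ?thesis using e ev_span_aux by simp
  qed
qed

lemma card_le_mdeg: assumes "alg z" "S \<subseteq> {ev p z | p. True}" "Q.independent S"
  shows "finite S \<and> card S \<le> mdeg z"
proof -
  have "S \<subseteq> Q.span (pw z (mdeg z))" using assms(2) ev_span[OF assms(1)] by blast
  from Q.independent_span_bound[OF _ assms(3) this] show ?thesis
    using card_pw[OF assms(1)] by (simp add: pw_def)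
qed

lemma alg_from_span: assumes "finite S" "\<And>j. z ^ j \<in> Q.span S"
  shows "alg z \<and> mdeg z \<le> card S"
proof -
  let ?n = "card S"
  have ex: "\<exists>p. p \<noteq> 0 \<and> degree p \<le> ?n \<and> ev p z = 0"
  proof (cases "inj_on (\<lambda>j. z ^ j) {..<Suc ?n}")
    case False
    then obtain a b where ab: "a < b" "b < Suc ?n" "z ^ a = z ^ b"
      unfolding inj_on_def by (metis lessThan_iff linorder_neqE_nat)
    let ?p = "monom 1 b - monom (1::rat) a"
    have "coeff ?p b = 1" using ab by (simp add: coeff_monom)
    hence "?p \<noteq> 0" by (metis coeff_0 zero_neq_one)
    moreover have "degree ?p \<le> ?n"
      by (rule degree_le, use ab in \<open>auto simp: coeff_monom\<close>)
    moreover have "ev ?p z = 0" using ab unfolding ev_def by (simp add: map_poly_monom poly_monom ofrp.hom_minus)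
    ultimately show ?thesis by blast
  next
    case True
    let ?T = "(\<lambda>j. z ^ j) ` {..<Suc ?n}"
    have cT: "card ?T = Suc ?n" using card_image[OF True] by simp
    have "Q.dependent ?T"
    proof (rule ccontr)
      assume "\<not> Q.dependent ?T"
      from Q.independent_span_bound[OF assms(1) this] assms(2) cT show False by auto
    qed
    then obtain u where u: "\<exists>v\<in>?T. u v \<noteq> 0" "(\<Sum>v\<in>?T. of_rat (u v) * v) = 0"
      using Q.dependent_finite[of ?T] by auto
    let ?p = "\<Sum>j<Suc ?n. monom (u (z ^ j)) j"
    have "ev ?p z = (\<Sum>j<Suc ?n. of_rat (u (z^j)) * z ^ j)" by (rule ev_monom_sum)
    also have "\<dots> = (\<Sum>v\<in>?T. of_rat (u v) * v)" by (subst sum.reindex[OF True]) simp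
    finally have "ev ?p z = 0" using u by simp
    from u obtain j where j: "j < Suc ?n" "u (z ^ j) \<noteq> 0" by auto
    hence "coeff ?p j \<noteq> 0" by (simp add: coeff_monom_sum)
    hence "?p \<noteq> 0" by (metis coeff_0 zero_neq_one)
    moreover have "degree ?p \<le> ?n" using degree_monom_sum[of "\<lambda>j. u (z^j)" "Suc ?n"] \<open>?p \<noteq> 0\<close>
      by auto
    ultimately show ?thesis using \<open>ev ?p z = 0\<close> by blast
  qed
  then obtain p where p: "p \<noteq> 0" "degree p \<le> ?n" "ev p z = 0" by blast
  thus ?thesis using mdeg_le[OF p(1) p(3)] unfolding alg_def by auto
qed

definition cp :: "complex set \<Rightarrow> complex poly \<Rightarrow> bool" where
  "cp F p \<longleftrightarrow> (\<forall>i. coeff p i \<in> F)"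

lemma sf_basic: assumes "is_subfield F"
  shows "0 \<in> F" "1 \<in> F" "x \<in> F \<Longrightarrow> y \<in> F \<Longrightarrow> x + y \<in> F" "x \<in> F \<Longrightarrow> y \<in> F \<Longrightarrow> x * y \<in> F"
    "x \<in> F \<Longrightarrow> - x \<in> F" "x \<in> F \<Longrightarrow> inverse x \<in> F"
    "x \<in> F \<Longrightarrow> y \<in> F \<Longrightarrow> x - y \<in> F" "x \<in> F \<Longrightarrow> y \<in> F \<Longrightarrow> x / y \<in> F"
proof -
  note a = assms[unfolded is_subfield_def]
  show "0 \<in> F" "1 \<in> F" using a by blast+
  show "x \<in> F \<Longrightarrow> y \<in> F \<Longrightarrow> x + y \<in> F" "x \<in> F \<Longrightarrow> y \<in> F \<Longrightarrow> x * y \<in> F"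
    "x \<in> F \<Longrightarrow> - x \<in> F" "x \<in> F \<Longrightarrow> inverse x \<in> F" using a by blast+
  show "x \<in> F \<Longrightarrow> y \<in> F \<Longrightarrow> x - y \<in> F" unfolding diff_conv_add_uminus using a by blast
  show "x \<in> F \<Longrightarrow> y \<in> F \<Longrightarrow> x / y \<in> F" unfolding divide_inverse using a by blast
qed

lemma sf_sum: assumes "is_subfield F" "\<And>i. i \<in> A \<Longrightarrow> f i \<in> F" shows "sum f A \<in> F"
  using assms(2)
proof (induction A rule: infinite_finite_induct)
  case (infinite A) thus ?case using sf_basic(1)[OF assms(1)] by simp
next
  case empty thus ?case using sf_basic(1)[OF assms(1)] by simp
next
  case (insert x A) thus ?case using sf_basic(3)[OF assms(1)] by simp
qed

lemma cp_0[simp]: "is_subfield F \<Longrightarrow> cp F 0" unfolding cp_def using sf_basic(1) by simp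

lemma cp_add: "is_subfield F \<Longrightarrow> cp F p \<Longrightarrow> cp F q \<Longrightarrow> cp F (p + q)"
  unfolding cp_def using sf_basic(3) by simp
lemma cp_diff: "is_subfield F \<Longrightarrow> cp F p \<Longrightarrow> cp F q \<Longrightarrow> cp F (p - q)"
  unfolding cp_def using sf_basic(7) by simp
lemma cp_smult: "is_subfield F \<Longrightarrow> c \<in> F \<Longrightarrow> cp F p \<Longrightarrow> cp F (smult c p)"
  unfolding cp_def using sf_basic(4) by simp
lemma cp_mult: assumes "is_subfield F" "cp F p" "cp F q" shows "cp F (p * q)"
  unfolding cp_def coeff_mult
proof
  fix n show "(\<Sum>i\<le>n. coeff p i * coeff q (n - i)) \<in> F"
    by (rule sf_sum[OF assms(1)], rule sf_basic(4)[OF assms(1)], use assms(2,3) in \<open>auto simp: cp_def\<close>)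
qed
lemma cp_monom: "is_subfield F \<Longrightarrow> c \<in> F \<Longrightarrow> cp F (monom c k)"
  unfolding cp_def coeff_monom using sf_basic(1) by simp
lemma cp_pCons: assumes "is_subfield F" "c \<in> F" "cp F p" shows "cp F (pCons c p)"
  unfolding cp_def
proof
  fix i show "coeff (pCons c p) i \<in> F" using assms unfolding cp_def by (cases i) simp_all
qed
lemma cp_pcompose: assumes "is_subfield F" "cp F p" "cp F q" shows "cp F (pcompose p q)"
  using assms(2)
proof (induction p)
  case 0 then show ?case using assms by simp
next
  case (pCons a p)
  have "a \<in> F" using pCons(3) unfolding cp_def by (metis coeff_pCons_0)
  moreover have "cp F p" using pCons(3) unfolding cp_def
    by (metis coeff_pCons_Suc)
  ultimately show ?case using pCons assms
    by (auto simp: pcompose_pCons intro!: cp_add cp_mult cp_pCons sf_basic)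
qed

lemma cp_mod: assumes "is_subfield F" "cp F p" "cp F q" shows "cp F (p mod q)"
  using assms(2)
proof (induction "degree p" arbitrary: p rule: less_induct)
  case less
  show ?case
  proof (cases "q = 0 \<or> p = 0 \<or> degree p < degree q")
    case True thus ?thesis using less by (auto simp: mod_poly_less)
  next
    case False
    hence q0: "q \<noteq> 0" and p0: "p \<noteq> 0" and dd: "degree q \<le> degree p" by auto
    define c where "c = lead_coeff p / lead_coeff q"
    define k where "k = degree p - degree q"
    define p' where "p' = p - monom c k * q"
    have c0: "c \<noteq> 0" using p0 q0 unfolding c_def by simp
    have cF: "c \<in> F" unfolding c_def using less(2) assms(3) sf_basic[OF assms(1)] unfolding cp_def by auto
    have cpp': "cp F p'" unfolding p'_def using assms cF less(2)
      by (auto intro!: cp_diff cp_mult cp_monom)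
    have dm: "degree (monom c k * q) = degree p" using c0 q0 dd unfolding k_def
      by (simp add: degree_mult_eq degree_monom_eq)
    have dp: "degree p = k + degree q" unfolding k_def using dd by simp
    have lm: "coeff (monom c k * q) (degree p) = lead_coeff p"
    proof -
      have "coeff (monom c k * q) (degree p) = c * coeff q (degree q)"
        unfolding dp coeff_monom_mult by simp
      thus ?thesis using q0 unfolding c_def by simp
    qed
    have cz: "coeff p' (degree p) = 0" unfolding p'_def using lm by simp
    have dle: "degree p' \<le> degree p" unfolding p'_def using dm
      by (metis degree_diff_le order_refl)
    have modeq: "p mod q = p' mod q"
    proof -
      have "p = p' + monom c k * q" unfolding p'_def by simp
      thus ?thesis by (metis mod_mult_self1 mult.commute)
    qed
    show ?thesis
    proof (cases "p' = 0")
      case True thus ?thesis using modeq assms by simp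
    next
      case False
      hence "degree p' < degree p" using cz dle
        by (metis leading_coeff_0_iff order_le_imp_less_or_eq)
      from less(1)[OF this cpp'] show ?thesis using modeq by simp
    qed
  qed
qed

lemma cp_normalize: assumes "is_subfield F" "cp F p" shows "cp F (normalize p)"
proof -
  have "lead_coeff p \<in> F" using assms(2) unfolding cp_def by simp
  hence "inverse (lead_coeff p) \<in> F" using sf_basic[OF assms(1)] by simp
  thus ?thesis by (simp add: normalize_poly_old_def cp_smult assms)
qed

lemma cp_gcd: assumes "is_subfield F" "cp F p" "cp F q" shows "cp F (gcd p q)"
  using assms(2,3)
proof (induction "degree q" arbitrary: p q rule: less_induct)
  case less
  show ?case
  proof (cases "q = 0")
    case True thus ?thesis using less cp_normalize[OF assms(1)] by simp
  next
    case False
    have g: "gcd p q = gcd q (p mod q)" using gcd_mod_right[OF False, of p] by (simp add: gcd.commute)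
    have cm: "cp F (p mod q)" using cp_mod assms less by blast
    show ?thesis
    proof (cases "p mod q = 0")
      case True thus ?thesis using g cp_normalize[OF assms(1) less(3)] by simp
    next
      case f2: False
      hence "degree (p mod q) < degree q" using False by (metis degree_mod_less')
      from less(1)[OF this less(3) cm] show ?thesis using g by simp
    qed
  qed
qed

definition FF :: "complex \<Rightarrow> complex set" where "FF g = {ev p g | p. True}"

lemma FF_subfield: assumes "alg g" shows "is_subfield (FF g)"
  unfolding is_subfield_def FF_def
proof (intro conjI ballI)
  show "0 \<in> {ev p g |p. True}" by (metis (mono_tags) ev_0 mem_Collect_eq)
  show "1 \<in> {ev p g |p. True}" by (metis (mono_tags) ev_1 mem_Collect_eq)
  fix x y assume x: "x \<in> {ev p g |p. True}" and y: "y \<in> {ev p g |p. True}"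
  then obtain p q where "x = ev p g" "y = ev q g" by auto
  thus "x + y \<in> {ev p g |p. True}" "x * y \<in> {ev p g |p. True}"
    by (metis (mono_tags) ev_add mem_Collect_eq, metis (mono_tags) ev_mult mem_Collect_eq)
next
  fix x assume x: "x \<in> {ev p g |p. True}"
  then obtain p where p: "x = ev p g" by auto
  show "- x \<in> {ev p g |p. True}" using p by (metis (mono_tags) ev_diff ev_0 diff_0 mem_Collect_eq)
  show "inverse x \<in> {ev p g |p. True}"
  proof (cases "x = 0")
    case True thus ?thesis using x by simp
  next
    case False
    from ev_inverse[OF assms, of p] False p obtain q where "ev q g * x = 1" by auto
    hence "inverse x = ev q g" by (metis inverse_unique mult.commute)
    thus ?thesis by auto
  qed
qed

lemma FF_rat: "of_rat c \<in> FF g" unfolding FF_def by (metis (mono_tags) ev_const mem_Collect_eq)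
lemma FF_self: "g \<in> FF g" unfolding FF_def by (metis (mono_tags) ev_x mem_Collect_eq)

lemma cp_ratpoly: "cp (FF g) (map_poly of_rat p)"
  unfolding cp_def by (simp add: coeff_map_poly FF_rat)

lemma complex_root_exists: fixes E :: "complex poly" assumes "degree E > 0" shows "\<exists>z. poly E z = 0"
  using fundamental_theorem_of_algebra constant_degree assms by (metis neq0_conv)

lemma prim: assumes a: "alg a" and b: "alg b" and ga: "\<And>r. alg (a + of_rat r * b)"
  shows "\<exists>r p. ev p (a + of_rat r * b) = b"
proof -
  define f where "f = map_poly (of_rat :: rat \<Rightarrow> complex) (mpol a)"
  define g where "g = map_poly (of_rat :: rat \<Rightarrow> complex) (mpol b)"
  have f0: "f \<noteq> 0" unfolding f_def using mpol(1)[OF a] by simp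
  have g0: "g \<noteq> 0" unfolding g_def using mpol(1)[OF b] by simp
  have fa: "poly f a = 0" using mpol(3)[OF a] unfolding f_def ev_def .
  have gb: "poly g b = 0" using mpol(3)[OF b] unfolding g_def ev_def .
  have df: "degree f \<ge> 1" unfolding f_def using mdeg_pos[OF a] mpol(2)[OF a] by simp
  define Ra where "Ra = {x. poly f x = 0}"
  define Rb where "Rb = {x. poly g x = 0}"
  have fin: "finite Ra" "finite Rb" unfolding Ra_def Rb_def using poly_roots_finite f0 g0 by auto
  define Bad where "Bad = insert 0 ((\<lambda>(x,y). (x - a) / (b - y)) ` (Ra \<times> Rb))"
  have "finite Bad" unfolding Bad_def using fin by simp
  moreover have "infinite (range (of_rat :: rat \<Rightarrow> complex))"
  proof -
    have "inj (of_rat :: rat \<Rightarrow> complex)" by (rule injI) simp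
    moreover have "infinite (UNIV :: rat set)" by (rule infinite_UNIV_char_0)
    ultimately show ?thesis using finite_imageD by blast
  qed
  ultimately obtain r where rB: "(of_rat r :: complex) \<notin> Bad"
    by (metis (no_types, lifting) finite_subset image_subset_iff subsetI)
  define \<rho> where "\<rho> = (of_rat r :: complex)"
  define \<gamma> where "\<gamma> = a + \<rho> * b"
  have \<rho>0: "\<rho> \<noteq> 0" using rB unfolding \<rho>_def Bad_def by auto
  have good: "x = a" if "x \<in> Ra" "y \<in> Rb" "x + \<rho> * y = \<gamma>" for x y
  proof (cases "y = b")
    case True thus ?thesis using that unfolding \<gamma>_def by simp
  next
    case False
    have "\<rho> = (x - a) / (b - y)" using that False unfolding \<gamma>_def
      by (simp add: field_simps)
    hence "\<rho> \<in> Bad" unfolding Bad_def using that by force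
    thus ?thesis using rB unfolding \<rho>_def by simp
  qed
  have alg\<gamma>: "alg \<gamma>" unfolding \<gamma>_def \<rho>_def by (rule ga)
  let ?F = "FF \<gamma>"
  have sf: "is_subfield ?F" by (rule FF_subfield[OF alg\<gamma>])
  define h where "h = pcompose f [:\<gamma>, - \<rho>:]"
  have polyh: "poly h x = poly f (\<gamma> - \<rho> * x)" for x unfolding h_def by (simp add: poly_pcompose mult.commute)
  have dh: "degree h = degree f" unfolding h_def using \<rho>0 by (simp add: degree_pcompose)
  hence h0: "h \<noteq> 0" using df by auto
  have cph: "cp ?F h"
  proof -
    have "cp ?F f" unfolding f_def by (rule cp_ratpoly)
    moreover have "- \<rho> \<in> ?F" unfolding \<rho>_def by (rule sf_basic(5)[OF sf], rule FF_rat)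
    hence "cp ?F [:\<gamma>, - \<rho>:]" using sf FF_self
      by (intro cp_pCons) (auto simp: sf_basic(1)[OF sf])
    ultimately show ?thesis unfolding h_def by (rule cp_pcompose[OF sf])
  qed
  have cpg: "cp ?F g" unfolding g_def by (rule cp_ratpoly)
  define D where "D = gcd g h"
  have cpD: "cp ?F D" unfolding D_def by (rule cp_gcd[OF sf cpg cph])
  have D0: "D \<noteq> 0" unfolding D_def using g0 by simp
  have hb: "poly h b = 0" using polyh fa unfolding \<gamma>_def by simp
  have "[:-b,1:] dvd g" using gb by (simp add: poly_eq_0_iff_dvd)
  moreover have "[:-b,1:] dvd h" using hb by (simp add: poly_eq_0_iff_dvd)
  ultimately have "[:-b,1:] dvd D" unfolding D_def by simp
  then obtain E where DE: "D = [:-b,1:] * E" by (auto elim: dvdE)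
  have E0: "E \<noteq> 0" using D0 DE by auto
  have rootD: "z = b" if "poly D z = 0" for z
  proof -
    have "[:-z,1:] dvd D" using that by (simp add: poly_eq_0_iff_dvd)
    hence "[:-z,1:] dvd g" "[:-z,1:] dvd h" unfolding D_def by (auto intro: dvd_trans)
    hence "poly g z = 0" "poly h z = 0" by (auto simp: poly_eq_0_iff_dvd)
    hence "z \<in> Rb" "\<gamma> - \<rho> * z \<in> Ra" unfolding Rb_def Ra_def using polyh by auto
    from good[OF this(2) this(1)] have "\<gamma> - \<rho> * z = a" by simp
    thus "z = b" using \<rho>0 unfolding \<gamma>_def by simp
  qed
  have dE: "degree E = 0"
  proof (rule ccontr)
    assume "degree E \<noteq> 0"
    then obtain z where z: "poly E z = 0" using complex_root_exists by auto
    hence "poly D z = 0" using DE by simp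
    hence "z = b" by (rule rootD)
    hence "[:-b,1:] dvd E" using z by (simp add: poly_eq_0_iff_dvd)
    then obtain E' where "E = [:-b,1:] * E'" by (auto elim: dvdE)
    hence "D = [:-b,1:] * [:-b,1:] * E'" using DE by (simp only: mult.assoc)
    moreover have "D dvd g" unfolding D_def by simp
    ultimately obtain G where G: "g = [:-b,1:] * [:-b,1:] * (E' * G)"
      by (metis dvdE mult.assoc)
    have pb: "poly [:-b,1:] b = 0" by simp
    have "poly (pderiv g) b = 0" unfolding G pderiv_mult poly_add poly_mult pb by simp
    moreover have "poly (pderiv g) b \<noteq> 0" using mpol_sep[OF b] gb unfolding g_def by simp
    ultimately show False by simp
  qed
  then obtain e where e: "E = [:e:]" by (metis degree_eq_zeroE)
  have e0: "e \<noteq> 0" using E0 e by simp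
  have c1: "coeff D 1 = e" "coeff D 0 = - b * e" using DE e by simp_all
  have "coeff D 1 \<in> ?F" "coeff D 0 \<in> ?F" using cpD unfolding cp_def by auto
  hence "- (coeff D 0) / coeff D 1 \<in> ?F" by (intro sf_basic(8)[OF sf] sf_basic(5)[OF sf])
  moreover have "- (coeff D 0) / coeff D 1 = b" using c1 e0 by simp
  ultimately have "b \<in> ?F" by simp
  hence "b \<in> {ev p (a + of_rat r * b) |p. True}" unfolding FF_def \<gamma>_def \<rho>_def .
  hence "\<exists>p. b = ev p (a + of_rat r * b)" by simp
  thus ?thesis by metis
qed

lemma rat_lin_indep_distinct: assumes "rat_lin_indep bs" shows "distinct bs"
proof (rule ccontr)
  assume "\<not> distinct bs"
  then obtain i j where ij: "i < length bs" "j < length bs" "i \<noteq> j" "bs ! i = bs ! j"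
    using distinct_conv_nth by blast
  define c where "c = (\<lambda>k. if k = i then (1::rat) else if k = j then -1 else 0)"
  have "(\<Sum>k<length bs. of_rat (c k) * bs ! k) = (\<Sum>k\<in>{i,j}. of_rat (c k) * bs ! k)"
    by (rule sum.mono_neutral_right) (use ij in \<open>auto simp: c_def\<close>)
  also have "\<dots> = 0" using ij by (simp add: c_def)
  finally have "c i = 0" using assms ij unfolding rat_lin_indep_def by blast
  thus False by (simp add: c_def)
qed

lemma rat_lin_indep_Q: assumes "rat_lin_indep bs" shows "Q.independent (set bs)"
proof (rule Q.independent_if_scalars_zero)
  show "finite (set bs)" by simp
  fix f x assume s: "(\<Sum>x\<in>set bs. of_rat (f x) * x) = 0" and x: "x \<in> set bs"
  have d: "distinct bs" by (rule rat_lin_indep_distinct[OF assms])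
  have "(\<Sum>k<length bs. of_rat (f (bs ! k)) * bs ! k) = (\<Sum>x\<in>set bs. of_rat (f x) * x)"
  proof -
    have im: "set bs = (\<lambda>k. bs ! k) ` {..<length bs}" by (auto simp: in_set_conv_nth)
    have inj: "inj_on (\<lambda>k. bs ! k) {..<length bs}" using d by (simp add: inj_on_def nth_eq_iff_index_eq)
    show ?thesis unfolding im sum.reindex[OF inj] by simp
  qed
  hence s2: "(\<Sum>k<length bs. of_rat (f (bs ! k)) * bs ! k) = 0" using s by simp
  have "\<forall>c. (\<Sum>i<length bs. of_rat (c i) * bs ! i) = 0 \<longrightarrow> (\<forall>i<length bs. c i = (0::rat))"
    using assms unfolding rat_lin_indep_def .
  hence "(\<Sum>i<length bs. of_rat ((\<lambda>k. f (bs ! k)) i) * bs ! i) = 0 \<longrightarrow> (\<forall>i<length bs. (\<lambda>k. f (bs ! k)) i = 0)"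
    by (rule spec)
  hence z: "\<forall>k<length bs. f (bs ! k) = 0" using s2 by simp
  from x obtain k where "k < length bs" "x = bs ! k" by (auto simp: in_set_conv_nth)
  thus "f x = 0" using z by simp
qed

lemma span_list_Q: "rat_span_list bs \<subseteq> Q.span (set bs)"
proof
  fix x assume "x \<in> rat_span_list bs"
  hence "\<exists>c. x = (\<Sum>i<length bs. of_rat (c i) * bs ! i)" unfolding rat_span_list_def by simp
  then obtain c where x: "x = (\<Sum>i<length bs. of_rat (c i) * bs ! i)" by blast
  show "x \<in> Q.span (set bs)" unfolding x
    by (rule Q.span_sum, rule Q.span_scale, rule Q.span_base) simp
qed

lemma FF_subspace: assumes "alg g" shows "Q.subspace (FF g)"
proof -
  note sf = FF_subfield[OF assms]
  show ?thesis unfolding Q.subspace_def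
    using sf_basic(1)[OF sf] sf_basic(3)[OF sf] sf_basic(4)[OF sf FF_rat] by blast
qed

lemma FF_mono: assumes "alg g" "a \<in> FF g" shows "FF a \<subseteq> FF g"
proof
  fix x assume "x \<in> FF a"
  then obtain p where x: "x = ev p a" unfolding FF_def by blast
  have sf: "is_subfield (FF g)" by (rule FF_subfield[OF assms(1)])
  have pa: "a ^ i \<in> FF g" for i
  proof (induction i)
    case 0 thus ?case using sf_basic(2)[OF sf] by simp
  next
    case (Suc i) thus ?case using sf_basic(4)[OF sf assms(2) Suc] by simp
  qed
  show "x \<in> FF g" unfolding x ev_sum
    by (rule sf_sum[OF sf], rule sf_basic(4)[OF sf], rule FF_rat, rule pa)
qed

lemma pw_FF: "pw g d \<subseteq> FF g"
proof
  fix x assume "x \<in> pw g d"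
  then obtain j where "x = g ^ j" unfolding pw_def by auto
  hence "x = ev (monom 1 j) g" unfolding ev_def by (simp add: map_poly_monom poly_monom)
  thus "x \<in> FF g" unfolding FF_def by blast
qed

context
  fixes K bs
  assumes sfK: "is_subfield K" and bas: "is_rat_basis K bs"
begin

lemma K_span: "K \<subseteq> Q.span (set bs)"
  using bas span_list_Q unfolding is_rat_basis_def by blast

lemma K_pow: "z \<in> K \<Longrightarrow> z ^ j \<in> K"
proof (induction j)
  case 0 thus ?case using sf_basic(2)[OF sfK] by simp
next
  case (Suc j) thus ?case using sf_basic(4)[OF sfK] by simp
qed

lemma K_alg: assumes "z \<in> K" shows "alg z" "mdeg z \<le> length bs"
proof -
  have "\<And>j. z ^ j \<in> Q.span (set bs)" using K_pow[OF assms] K_span by blast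
  from alg_from_span[OF _ this] have "alg z \<and> mdeg z \<le> card (set bs)" by simp
  moreover have "card (set bs) \<le> length bs" by (rule card_length)
  ultimately show "alg z" "mdeg z \<le> length bs" by auto
qed

lemma K_nat: "of_nat k \<in> K"
proof (induction k)
  case 0 thus ?case using sf_basic(1)[OF sfK] by simp
next
  case (Suc k) thus ?case using sf_basic(3)[OF sfK sf_basic(2)[OF sfK]] by simp
qed

lemma K_int: "of_int k \<in> K"
proof (cases "k \<ge> 0")
  case True thus ?thesis using K_nat[of "nat k"] by simp
next
  case False
  hence "of_int k = - (of_nat (nat (- k)) :: complex)" by simp
  thus ?thesis using sf_basic(5)[OF sfK K_nat] by simp
qed

lemma K_rat: "of_rat r \<in> K"
proof -
  obtain a b where "r = Rat.Fract a b" "b > 0" by (cases r) auto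
  hence "of_rat r = (of_int a / of_int b :: complex)" by (simp add: of_rat_rat)
  thus ?thesis using sf_basic(8)[OF sfK K_int K_int] by simp
qed

lemma K_prim: "\<exists>g\<in>K. mdeg g = length bs \<and> K \<subseteq> FF g"
proof -
  have "\<exists>a\<in>K. \<forall>z\<in>K. mdeg z \<le> mdeg a"
  proof -
    have fin: "finite (mdeg ` K)" by (rule finite_subset[of _ "{..length bs}"]) (use K_alg in auto)
    have ne: "mdeg ` K \<noteq> {}" using sf_basic(1)[OF sfK] by auto
    obtain a where "a \<in> K" "mdeg a = Max (mdeg ` K)" using Max_in[OF fin ne] by auto
    moreover have "\<forall>z\<in>K. mdeg z \<le> Max (mdeg ` K)" using Max_ge[OF fin] by blast
    ultimately show ?thesis by metis
  qed
  then obtain a where aK: "a \<in> K" and amax: "\<And>z. z \<in> K \<Longrightarrow> mdeg z \<le> mdeg a" by blast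
  have alga: "alg a" by (rule K_alg(1)[OF aK])
  have KF: "K \<subseteq> FF a"
  proof
    fix b assume bK: "b \<in> K"
    show "b \<in> FF a"
    proof (rule ccontr)
      assume nb: "b \<notin> FF a"
      have inK: "a + of_rat r * b \<in> K" for r
        by (rule sf_basic(3)[OF sfK aK sf_basic(4)[OF sfK K_rat bK]])
      have "\<And>r. alg (a + of_rat r * b)" by (rule K_alg(1)[OF inK])
      from prim[OF alga K_alg(1)[OF bK] this] obtain r p where
        rp: "ev p (a + of_rat r * b) = b" by blast
      define g where "g = a + of_rat r * b"
      have gK: "g \<in> K" unfolding g_def by (rule inK)
      have algg: "alg g" by (rule K_alg(1)[OF gK])
      have sfg: "is_subfield (FF g)" by (rule FF_subfield[OF algg])
      have "\<exists>q. b = ev q g" using rp unfolding g_def by (intro exI[of _ p]) simp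
      hence bg: "b \<in> FF g" unfolding FF_def by simp
      have "a = g - of_rat r * b" unfolding g_def by simp
      moreover have "g - of_rat r * b \<in> FF g" by (rule sf_basic(7)[OF sfg FF_self sf_basic(4)[OF sfg FF_rat bg]])
      ultimately have ag: "a \<in> FF g" by simp
      have sub: "FF a \<subseteq> FF g" by (rule FF_mono[OF algg ag])
      let ?S = "insert b (pw a (mdeg a))"
      have "Q.span (pw a (mdeg a)) \<subseteq> FF a"
        by (rule Q.span_minimal[OF pw_FF FF_subspace[OF alga]])
      hence "b \<notin> Q.span (pw a (mdeg a))" using nb by (meson subsetD)
      hence ind: "Q.independent ?S" by (rule Q.independent_insertI[OF _ pw_indep[OF alga]])
      have bnp: "b \<notin> pw a (mdeg a)" using nb pw_FF[of a "mdeg a"] by (meson subsetD)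
      have "finite (pw a (mdeg a))" unfolding pw_def by simp
      hence cS: "card ?S = Suc (mdeg a)" using bnp card_pw[OF alga] by (metis card_insert_disjoint)
      have "pw a (mdeg a) \<subseteq> FF g" by (rule order.trans[OF pw_FF sub])
      hence "?S \<subseteq> FF g" using bg by (simp only: insert_subset)
      hence Ssub: "?S \<subseteq> {ev p g | p. True}" unfolding FF_def .
      have "card ?S \<le> mdeg g" using card_le_mdeg[OF algg Ssub ind] by (rule conjunct2)
      hence "Suc (mdeg a) \<le> mdeg g" unfolding cS .
      with amax[OF gK] show False by linarith
    qed
  qed
  have b1: "set bs \<subseteq> K" and b2: "rat_lin_indep bs" using bas unfolding is_rat_basis_def by auto
  have "set bs \<subseteq> {ev p a | p. True}" using KF b1 unfolding FF_def[symmetric] by (rule order.trans[rotated])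
  from card_le_mdeg[OF alga this rat_lin_indep_Q[OF b2]]
  have "card (set bs) \<le> mdeg a" by simp
  moreover have "card (set bs) = length bs"
    by (rule distinct_card[OF rat_lin_indep_distinct[OF b2]])
  ultimately have "mdeg a = length bs" using K_alg(2)[OF aK] by simp
  thus ?thesis using aK KF by blast
qed

end

context
  fixes K bs
  assumes sfK: "is_subfield K" and bas: "is_rat_basis K bs"
begin

lemma span_eq: "rat_span_list bs = K" using bas unfolding is_rat_basis_def by blast
lemma indep: "rat_lin_indep bs" using bas unfolding is_rat_basis_def by blast
lemma setK: "set bs \<subseteq> K" using bas unfolding is_rat_basis_def by blast

lemma coord_ex: assumes "x \<in> K" shows "\<exists>c. x = (\<Sum>i<length bs. of_rat (c i) * bs ! i)"
proof -
  have "x \<in> rat_span_list bs" using span_eq assms by simp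
  thus ?thesis unfolding rat_span_list_def by simp
qed

lemma sum_inK: "(\<Sum>i<length bs. of_rat (c i) * bs ! i) \<in> K"
proof -
  have "(\<Sum>i<length bs. of_rat (c i) * bs ! i) \<in> rat_span_list bs"
    unfolding rat_span_list_def mem_Collect_eq by (rule exI[of _ c]) simp
  thus ?thesis using span_eq by simp
qed

lemma indepD: assumes "(\<Sum>i<length bs. of_rat (e i) * bs ! i) = 0" "i < length bs" shows "e i = 0"
  using indep assms unfolding rat_lin_indep_def by blast

lemma coord_uniq: assumes "(\<Sum>i<length bs. of_rat (c i) * bs ! i) = (\<Sum>i<length bs. of_rat (d i) * bs ! i)"
  "i < length bs" shows "c i = d i"
proof -
  have "(\<Sum>i<length bs. of_rat ((\<lambda>k. c k - d k) i) * bs ! i) =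
     (\<Sum>i<length bs. of_rat (c i) * bs ! i) - (\<Sum>i<length bs. of_rat (d i) * bs ! i)"
    by (simp add: of_rat_diff algebra_simps sum_subtractf)
  also have "\<dots> = 0" using assms(1) by simp
  finally have "(\<Sum>i<length bs. of_rat ((\<lambda>k. c k - d k) i) * bs ! i) = 0" .
  from indepD[OF this assms(2)] show ?thesis by simp
qed

definition crd :: "complex \<Rightarrow> nat \<Rightarrow> rat" where
  "crd x = (SOME c. x = (\<Sum>i<length bs. of_rat (c i) * bs ! i))"

lemma crd: assumes "x \<in> K" shows "x = (\<Sum>i<length bs. of_rat (crd x i) * bs ! i)"
  unfolding crd_def using someI_ex[OF coord_ex[OF assms]] .

lemma crd_eq: assumes "x = (\<Sum>i<length bs. of_rat (c i) * bs ! i)" "i < length bs"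
  shows "crd x i = c i"
proof -
  have "x \<in> K" using assms(1) sum_inK by simp
  from crd[OF this] assms(1) have "(\<Sum>i<length bs. of_rat (crd x i) * bs ! i) = (\<Sum>i<length bs. of_rat (c i) * bs ! i)" by simp
  from coord_uniq[OF this assms(2)] show ?thesis .
qed

definition MM :: "complex \<Rightarrow> rat mat" where
  "MM a = mat (length bs) (length bs) (\<lambda>(i,j). crd (a * bs ! j) i)"

lemma MM_carrier: "MM a \<in> carrier_mat (length bs) (length bs)" unfolding MM_def by simp

lemma mult_matrix_eq: assumes aK: "a \<in> K" shows "mult_matrix bs a = MM a"
  unfolding mult_matrix_def
proof (rule the_equality)
  show "MM a \<in> carrier_mat (length bs) (length bs) \<and>
    (\<forall>j<length bs. a * bs ! j = (\<Sum>i<length bs. of_rat (MM a $$ (i, j)) * bs ! i))"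
  proof (intro conjI allI impI, rule MM_carrier)
    fix j assume j: "j < length bs"
    have "bs ! j \<in> K" using setK j nth_mem by blast
    hence "a * bs ! j \<in> K" using aK sf_basic(4)[OF sfK] by simp
    from crd[OF this] show "a * bs ! j = (\<Sum>i<length bs. of_rat (MM a $$ (i, j)) * bs ! i)"
      using j unfolding MM_def by simp
  qed
next
  fix M assume M: "M \<in> carrier_mat (length bs) (length bs) \<and>
    (\<forall>j<length bs. a * bs ! j = (\<Sum>i<length bs. of_rat (M $$ (i, j)) * bs ! i))"
  show "M = MM a"
  proof (rule eq_matI)
    fix i j assume ij: "i < dim_row (MM a)" "j < dim_col (MM a)"
    hence ij': "i < length bs" "j < length bs" unfolding MM_def by auto
    have "a * bs ! j = (\<Sum>i<length bs. of_rat (M $$ (i, j)) * bs ! i)" using M ij'(2) by blast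
    from crd_eq[OF this ij'(1)] have "crd (a * bs ! j) i = M $$ (i, j)" .
    thus "M $$ (i, j) = MM a $$ (i, j)" using ij' unfolding MM_def by simp
  qed (use M in \<open>auto simp: MM_def\<close>)
qed

lemma mulK: assumes "a \<in> K" "j < length bs" shows "a * bs ! j \<in> K"
proof -
  have "bs ! j \<in> K" using setK assms(2) nth_mem by blast
  thus ?thesis using assms(1) sf_basic(4)[OF sfK] by simp
qed

lemma MM_mult: assumes aK: "a \<in> K" and bK: "b \<in> K" shows "MM (a * b) = MM a * MM b"
proof (rule eq_matI)
  fix i j assume ij: "i < dim_row (MM a * MM b)" "j < dim_col (MM a * MM b)"
  hence i: "i < length bs" and j: "j < length bs" unfolding MM_def by auto
  let ?n = "length bs"
  have rhs: "(MM a * MM b) $$ (i, j) = (\<Sum>k<?n. crd (a * bs ! k) i * crd (b * bs ! j) k)"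
    using i j unfolding MM_def by (simp add: scalar_prod_def atLeast0LessThan)
  have "a * b * bs ! j = a * (\<Sum>k<?n. of_rat (crd (b * bs ! j) k) * bs ! k)"
    using crd[OF mulK[OF bK j]] by simp
  also have "\<dots> = (\<Sum>k<?n. of_rat (crd (b * bs ! j) k) * (a * bs ! k))"
    by (simp add: sum_distrib_left algebra_simps)
  also have "\<dots> = (\<Sum>k<?n. of_rat (crd (b * bs ! j) k) * (\<Sum>l<?n. of_rat (crd (a * bs ! k) l) * bs ! l))"
  proof (rule sum.cong[OF refl])
    fix k assume "k \<in> {..<?n}"
    hence "k < ?n" by simp
    from crd[OF mulK[OF aK this]]
    show "of_rat (crd (b * bs ! j) k) * (a * bs ! k) = of_rat (crd (b * bs ! j) k) * (\<Sum>l<?n. of_rat (crd (a * bs ! k) l) * bs ! l)"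
      by (rule arg_cong)
  qed
  also have "\<dots> = (\<Sum>k<?n. \<Sum>l<?n. of_rat (crd (b * bs ! j) k) * (of_rat (crd (a * bs ! k) l) * bs ! l))"
    by (simp only: sum_distrib_left)
  also have "\<dots> = (\<Sum>l<?n. \<Sum>k<?n. of_rat (crd (b * bs ! j) k) * (of_rat (crd (a * bs ! k) l) * bs ! l))"
    by (rule sum.swap)
  also have "\<dots> = (\<Sum>l<?n. (\<Sum>k<?n. of_rat (crd (a * bs ! k) l * crd (b * bs ! j) k)) * bs ! l)"
    by (simp add: sum_distrib_left sum_distrib_right of_rat_mult mult_ac)
  also have "\<dots> = (\<Sum>l<?n. of_rat (\<Sum>k<?n. crd (a * bs ! k) l * crd (b * bs ! j) k) * bs ! l)"
    by (simp only: of_rat_sum)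
  finally have "crd (a * b * bs ! j) i = (\<Sum>k<?n. crd (a * bs ! k) i * crd (b * bs ! j) k)"
    by (rule crd_eq[OF _ i])
  thus "MM (a * b) $$ (i, j) = (MM a * MM b) $$ (i, j)" using rhs i j unfolding MM_def by simp
qed (auto simp: MM_def)

lemma MM_rat_diff: assumes aK: "a \<in> K" shows "MM (a - of_rat t) = MM a - t \<cdot>\<^sub>m 1\<^sub>m (length bs)"
proof (rule eq_matI)
  fix i j assume ij: "i < dim_row (MM a - t \<cdot>\<^sub>m 1\<^sub>m (length bs))" "j < dim_col (MM a - t \<cdot>\<^sub>m 1\<^sub>m (length bs))"
  hence i: "i < length bs" and j: "j < length bs" unfolding MM_def by auto
  let ?n = "length bs"
  have "(a - of_rat t) * bs ! j = a * bs ! j - of_rat t * bs ! j" by (simp add: algebra_simps)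
  also have "\<dots> = (\<Sum>l<?n. of_rat (crd (a * bs ! j) l) * bs ! l) - (\<Sum>l<?n. of_rat (if l = j then t else 0) * bs ! l)"
  proof -
    have "(\<Sum>l<?n. of_rat (if l = j then t else 0) * bs ! l) = (\<Sum>l<?n. if l = j then of_rat t * bs ! j else 0)"
      by (rule sum.cong) auto
    also have "\<dots> = of_rat t * bs ! j" using j by simp
    finally show ?thesis using crd[OF mulK[OF aK j]] by simp
  qed
  also have "\<dots> = (\<Sum>l<?n. of_rat (crd (a * bs ! j) l - (if l = j then t else 0)) * bs ! l)"
    by (simp add: sum_subtractf of_rat_diff algebra_simps)
  finally have "crd ((a - of_rat t) * bs ! j) i = crd (a * bs ! j) i - (if i = j then t else 0)"
    by (rule crd_eq[OF _ i])
  thus "MM (a - of_rat t) $$ (i, j) = (MM a - t \<cdot>\<^sub>m 1\<^sub>m (length bs)) $$ (i, j)"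
    using i j unfolding MM_def by simp
qed (auto simp: MM_def)

lemma MM_0: "MM 0 = 0\<^sub>m (length bs) (length bs)"
proof (rule eq_matI)
  fix i j assume "i < dim_row (0\<^sub>m (length bs) (length bs))" "j < dim_col (0\<^sub>m (length bs) (length bs) :: rat mat)"
  hence i: "i < length bs" and j: "j < length bs" by auto
  have "0 * bs ! j = (\<Sum>l<length bs. of_rat ((\<lambda>_. 0::rat) l) * bs ! l)" by simp
  from crd_eq[OF this i] show "MM 0 $$ (i, j) = 0\<^sub>m (length bs) (length bs) $$ (i, j)"
    using i j unfolding MM_def by simp
qed (auto simp: MM_def)

lemma MM_rat: "MM (of_rat t) = t \<cdot>\<^sub>m 1\<^sub>m (length bs)"
proof -
  have "MM (0 - of_rat (- t)) = MM 0 - (- t) \<cdot>\<^sub>m 1\<^sub>m (length bs)" by (rule MM_rat_diff, rule sf_basic(1)[OF sfK])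
  hence e: "MM (of_rat t) = 0\<^sub>m (length bs) (length bs) - (- t) \<cdot>\<^sub>m 1\<^sub>m (length bs)" by (simp add: MM_0 of_rat_minus)
  show ?thesis unfolding e by (rule eq_matI) auto
qed

definition nrm :: "complex \<Rightarrow> rat" where "nrm a = det (MM a)"

lemma nrm_mult: "a \<in> K \<Longrightarrow> b \<in> K \<Longrightarrow> nrm (a * b) = nrm a * nrm b"
  unfolding nrm_def using MM_mult det_mult[OF MM_carrier MM_carrier] by simp

lemma nrm_rat: "nrm (of_rat t) = t ^ length bs"
  unfolding nrm_def MM_rat by simp

lemma bs_nonzero: assumes "0 < length bs" shows "bs ! 0 \<noteq> 0"
proof
  assume b0: "bs ! 0 = 0"
  have "(\<Sum>l<length bs. of_rat ((\<lambda>l. if l = 0 then 1 else (0::rat)) l) * bs ! l) = 0"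
    by (rule sum.neutral) (use b0 in auto)
  from indepD[OF this assms] show False by simp
qed

lemma eigen_root: assumes gK: "g \<in> K" and n0: "0 < length bs"
  shows "ev (char_poly (MM g)) g = 0"
proof -
  let ?n = "length bs"
  define A where "A = map_mat (of_rat :: rat \<Rightarrow> complex) (MM g)"
  have A: "A \<in> carrier_mat ?n ?n" unfolding A_def using MM_carrier by simp
  have tA: "transpose_mat A \<in> carrier_mat ?n ?n" using A by simp
  define w where "w = vec ?n (\<lambda>i. bs ! i)"
  have w: "w \<in> carrier_vec ?n" unfolding w_def by simp
  have w0: "w \<noteq> 0\<^sub>v ?n"
  proof
    assume "w = 0\<^sub>v ?n"
    hence "w $ 0 = 0" using n0 by simp
    thus False using bs_nonzero[OF n0] n0 unfolding w_def by simp
  qed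
  have "transpose_mat A *\<^sub>v w = g \<cdot>\<^sub>v w"
  proof (rule eq_vecI)
    fix j assume "j < dim_vec (g \<cdot>\<^sub>v w)"
    hence j: "j < ?n" unfolding w_def by simp
    have "(transpose_mat A *\<^sub>v w) $ j = (\<Sum>i<?n. of_rat (crd (g * bs ! j) i) * bs ! i)"
      using j A unfolding A_def w_def MM_def
      by (simp add: scalar_prod_def atLeast0LessThan mult.commute)
    also have "\<dots> = g * bs ! j" using crd[OF mulK[OF gK j]] by simp
    finally show "(transpose_mat A *\<^sub>v w) $ j = (g \<cdot>\<^sub>v w) $ j" using j unfolding w_def by simp
  qed (use A w_def in auto)
  hence "eigenvector (transpose_mat A) w g" unfolding eigenvector_def using w w0 A by simp
  hence "eigenvalue (transpose_mat A) g" unfolding eigenvalue_def by blast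
  hence "poly (char_poly (transpose_mat A)) g = 0" using eigenvalue_root_char_poly[OF tA] by simp
  hence "poly (char_poly A) g = 0" using char_poly_transpose_mat[OF A] by simp
  moreover have "char_poly A = map_poly of_rat (char_poly (MM g))"
    unfolding A_def by (rule of_rat_hom.char_poly_hom[OF MM_carrier])
  ultimately show ?thesis unfolding ev_def by simp
qed

end

lemma real_sign_change: fixes f :: "real \<Rightarrow> real"
  assumes der: "DERIV f x :> l" and l: "l \<noteq> 0" and fx: "f x = 0"
  shows "\<exists>r1\<in>\<rat>. \<exists>r2\<in>\<rat>. f r1 < 0 \<and> 0 < f r2"
proof (cases "l > 0")
  case True
  obtain d where d: "d > 0" "\<forall>h>0. h < d \<longrightarrow> f x < f (x + h)" using DERIV_pos_inc_right[OF der True] by blast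
  obtain d' where d': "d' > 0" "\<forall>h>0. h < d' \<longrightarrow> f (x - h) < f x" using DERIV_pos_inc_left[OF der True] by blast
  obtain r2 where r2: "r2 \<in> \<rat>" "x < r2" "r2 < x + d" using Rats_dense_in_real[of x "x + d"] d by auto
  obtain r1 where r1: "r1 \<in> \<rat>" "x - d' < r1" "r1 < x" using Rats_dense_in_real[of "x - d'" x] d' by auto
  have "f (x + (r2 - x)) > 0" using d(2)[rule_format, of "r2 - x"] r2 fx by simp
  moreover have "f (x - (x - r1)) < 0" using d'(2)[rule_format, of "x - r1"] r1 fx by simp
  ultimately show ?thesis using r1 r2 by auto
next
  case False
  hence lneg: "l < 0" using l by simp
  obtain d where d: "d > 0" "\<forall>h>0. h < d \<longrightarrow> f x > f (x + h)" using DERIV_neg_dec_right[OF der lneg] by blast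
  obtain d' where d': "d' > 0" "\<forall>h>0. h < d' \<longrightarrow> f x < f (x - h)" using DERIV_neg_dec_left[OF der lneg] by blast
  obtain r2 where r2: "r2 \<in> \<rat>" "x < r2" "r2 < x + d" using Rats_dense_in_real[of x "x + d"] d by auto
  obtain r1 where r1: "r1 \<in> \<rat>" "x - d' < r1" "r1 < x" using Rats_dense_in_real[of "x - d'" x] d' by auto
  have "f (x + (r2 - x)) < 0" using d(2)[rule_format, of "r2 - x"] r2 fx by simp
  moreover have "f (x - (x - r1)) > 0" using d'(2)[rule_format, of "x - r1"] r1 fx by simp
  ultimately show ?thesis using r1 r2 by auto
qed

lemma of_real_of_rat_c[simp]: "complex_of_real (real_of_rat q) = complex_of_rat q"
proof -
  obtain a b where "q = Rat.Fract a b" "b > 0" by (cases q) auto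
  thus ?thesis by (simp add: of_rat_rat)
qed

lemma ev_real: fixes x :: real shows "ev p (of_real x) = of_real (poly (map_poly of_rat p) x)"
  unfolding ev_def poly_altdef
  by (simp add: of_rat_hom.degree_map_poly_hom coeff_map_poly of_real_sum of_real_mult of_real_power)

lemma rat_sign_change: assumes g: "g \<in> \<real>" and e: "ev p g = 0" and d: "ev (pderiv p) g \<noteq> 0"
  shows "\<exists>q1 q2. poly p q1 < 0 \<and> 0 < poly p q2"
proof -
  obtain x where x: "g = of_real x" using g by (auto elim: Reals_cases)
  define R where "R = map_poly (of_rat :: rat \<Rightarrow> real) p"
  have der: "DERIV (poly R) x :> poly (pderiv R) x" by (rule poly_DERIV)
  have "of_real (poly R x) = (0::complex)" using e ev_real[of p x] x unfolding R_def by simp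
  hence fx: "poly R x = 0" by simp
  have "pderiv R = map_poly of_rat (pderiv p)" unfolding R_def by (simp add: of_rat_hom.map_poly_pderiv)
  hence "of_real (poly (pderiv R) x) \<noteq> (0::complex)" using d ev_real[of "pderiv p" x] x by simp
  hence l: "poly (pderiv R) x \<noteq> 0" by simp
  from real_sign_change[OF der l fx] obtain r1 r2 where
    r: "r1 \<in> \<rat>" "r2 \<in> \<rat>" "poly R r1 < 0" "0 < poly R r2" by blast
  obtain q1 where q1: "r1 = of_rat q1" using r(1) by (auto elim: Rats_cases)
  obtain q2 where q2: "r2 = of_rat q2" using r(2) by (auto elim: Rats_cases)
  have "poly R r1 = of_rat (poly p q1)" unfolding R_def q1 by simp
  hence "poly p q1 < 0" using r(3) by simp
  moreover have "poly R r2 = of_rat (poly p q2)" unfolding R_def q2 by simp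
  hence "0 < poly p q2" using r(4) by simp
  ultimately show ?thesis by blast
qed

context
  fixes K bs
  assumes sfK: "is_subfield K" and bas: "is_rat_basis K bs"
begin

lemma det_neg: assumes "A \<in> carrier_mat n n" shows "det (- A) = (-1) ^ n * det (A :: rat mat)"
proof -
  have "- A = (-1) \<cdot>\<^sub>m A" by (rule eq_matI) (use assms in auto)
  thus ?thesis using assms by simp
qed

lemma neg_norm: assumes KR: "K \<subseteq> \<real>"
  shows "\<exists>a\<in>K. nrm bs a < 0" and "0 < length bs"
proof -
  let ?n = "length bs"
  obtain g where gK: "g \<in> K" and mg: "mdeg g = ?n" using K_prim[OF sfK bas] by blast
  have algg: "alg g" by (rule K_alg(1)[OF sfK bas gK])
  show n0: "0 < ?n" using mdeg_pos[OF algg] mg by linarith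
  define \<chi> where "\<chi> = char_poly (MM bs g)"
  have dchi: "degree \<chi> = ?n" "coeff \<chi> ?n = 1"
    unfolding \<chi>_def using degree_monic_char_poly[OF MM_carrier[OF sfK bas]] by auto
  have "ev \<chi> g = 0" unfolding \<chi>_def by (rule eigen_root[OF sfK bas gK n0])
  hence "mpol g dvd \<chi>" using mpol_dvd[OF algg] by simp
  then obtain h where h: "\<chi> = mpol g * h" by (auto elim: dvdE)
  have chi0: "\<chi> \<noteq> 0" using dchi n0 by auto
  hence h0: "h \<noteq> 0" using h by auto
  have "degree \<chi> = degree (mpol g) + degree h" using h degree_mult_eq mpol(1)[OF algg] h0 by metis
  hence "degree h = 0" using dchi mpol(2)[OF algg] mg by simp
  then obtain c where c: "h = [:c:]" by (metis degree_eq_zeroE)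
  have "coeff \<chi> ?n = coeff (mpol g) ?n * c" unfolding h c by simp
  hence "c = 1" using dchi mpol(2,4)[OF algg] mg by simp
  hence chim: "\<chi> = mpol g" using h c by simp
  have "poly (map_poly of_rat (mpol g)) g = 0" using mpol(3)[OF algg] unfolding ev_def .
  from mpol_sep[OF algg this] have "ev (pderiv \<chi>) g \<noteq> 0"
    unfolding chim ev_def by (simp add: of_rat_hom.map_poly_pderiv)
  moreover have "g \<in> \<real>" using KR gK by blast
  ultimately obtain q1 q2 where q: "poly \<chi> q1 < 0" "0 < poly \<chi> q2"
    using rat_sign_change \<open>ev \<chi> g = 0\<close> by blast
  have key: "nrm bs (g - of_rat t) = (-1) ^ ?n * poly \<chi> t" for t
  proof -
    have M: "MM bs g \<in> carrier_mat ?n ?n" by (rule MM_carrier[OF sfK bas])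
    have cm: "char_matrix (MM bs g) t = MM bs g - t \<cdot>\<^sub>m 1\<^sub>m ?n"
      unfolding char_matrix_def by (rule eq_matI) (use M in auto)
    have "poly \<chi> t = det (- (char_matrix (MM bs g) t))" unfolding \<chi>_def by (rule char_poly_matrix[OF M])
    also have "\<dots> = (-1) ^ ?n * det (char_matrix (MM bs g) t)" by (rule det_neg) (use M in simp)
    also have "\<dots> = (-1) ^ ?n * nrm bs (g - of_rat t)"
      unfolding cm using MM_rat_diff[OF sfK bas gK, of t] by (simp add: nrm_def[OF sfK bas])
    finally show ?thesis by (simp add: power_mult_distrib[symmetric])
  qed
  have inK: "g - of_rat t \<in> K" for t using sf_basic(7)[OF sfK gK K_rat[OF sfK bas]] .
  show "\<exists>a\<in>K. nrm bs a < 0"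
  proof (cases "even ?n")
    case True
    hence "nrm bs (g - of_rat q1) < 0" using key[of q1] q(1) by simp
    thus ?thesis using inK[of q1] by blast
  next
    case False
    hence "nrm bs (g - of_rat q2) < 0" using key[of q2] q(2) by simp
    thus ?thesis using inK[of q2] by blast
  qed
qed

lemma pos_mult_sum: assumes aK: "a \<in> K" and n0: "0 < length bs" and y: "y > 0"
  shows "\<exists>(m::nat) (f::nat \<Rightarrow> complex). (\<forall>i<m. f i \<in> K) \<and> (\<Sum>i<m. nrm bs (f i)) = nrm bs a * y"
proof -
  let ?n = "length bs"
  obtain p q where pq: "y = Rat.Fract p q" "q > 0" by (cases y) auto
  have yq: "y = of_int p / of_int q" using pq by (simp add: Fract_of_int_quotient)
  have "(0::rat) < of_int p / of_int q" using y yq by simp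
  hence p: "p > 0" using pq(2) by (simp add: zero_less_divide_iff)
  define u where "u = inverse (of_int q :: rat)"
  define f where "f = (\<lambda>i::nat. a * of_rat u)"
  define m where "m = nat (p * q ^ (?n - 1))"
  have fK: "\<forall>i<m. f i \<in> K" unfolding f_def using sf_basic(4)[OF sfK aK K_rat[OF sfK bas]] by simp
  have nf: "nrm bs (f i) = nrm bs a * u ^ ?n" for i
    unfolding f_def using nrm_mult[OF sfK bas aK K_rat[OF sfK bas]] nrm_rat[OF sfK bas] by simp
  have "(\<Sum>i<m. nrm bs (f i)) = of_nat m * (nrm bs a * u ^ ?n)" using nf by simp
  also have "of_nat m = (of_int p * of_int q ^ (?n - 1) :: rat)" unfolding m_def using p pq(2)
    by (simp add: of_nat_nat)
  also have "of_int p * of_int q ^ (?n - 1) * (nrm bs a * u ^ ?n) = nrm bs a * y"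
  proof -
    have qn: "(of_int q :: rat) ^ ?n = of_int q * of_int q ^ (?n - 1)" using n0
      by (metis Suc_diff_1 power_Suc)
    have q0: "(of_int q :: rat) \<noteq> 0" using pq(2) by simp
    show ?thesis unfolding yq u_def power_inverse qn using q0 by (simp add: field_simps)
  qed
  finally have "(\<Sum>i<m. nrm bs (f i)) = nrm bs a * y" .
  thus ?thesis using fK by (intro exI[of _ m] exI[of _ f]) simp
qed

end

theorem mainTheorem10:
  fixes K :: "complex set"
  assumes "number_field K" and "totally_real K" and "galois_over_Q K"
  shows "norm_sums K = UNIV"
proof -
  have sfK: "is_subfield K" using assms(1) unfolding number_field_def by blast
  have ex: "\<exists>bs. is_rat_basis K bs" using assms(1) unfolding number_field_def by blast
  define bs where "bs = (SOME bs. is_rat_basis K bs)"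
  have bas: "is_rat_basis K bs" unfolding bs_def by (rule someI_ex[OF ex])
  have fn: "field_norm K a = nrm bs a" if "a \<in> K" for a
    unfolding field_norm_def bs_def[symmetric] mult_matrix_eq[OF sfK bas that] nrm_def[OF sfK bas] ..
  have "field_embedding K id" unfolding field_embedding_def by simp
  hence "id ` K \<subseteq> \<real>" using assms(2) unfolding totally_real_def by blast
  hence KR: "K \<subseteq> \<real>" by simp
  obtain a0 where a0: "a0 \<in> K" "nrm bs a0 < 0" using neg_norm(1)[OF sfK bas KR] by blast
  have n0: "0 < length bs" using neg_norm(2)[OF sfK bas KR] .
  have mem: "x \<in> norm_sums K" if "\<exists>(m::nat) (f::nat \<Rightarrow> complex). (\<forall>i<m. f i \<in> K) \<and> (\<Sum>i<m. nrm bs (f i)) = x" for x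
  proof -
    from that obtain m :: nat and f :: "nat \<Rightarrow> complex" where mf: "\<forall>i<m. f i \<in> K" "(\<Sum>i<m. nrm bs (f i)) = x" by blast
    have "(\<Sum>i<m. field_norm K (f i)) = x" using mf fn by simp
    thus ?thesis unfolding norm_sums_def using mf(1) by blast
  qed
  have "x \<in> norm_sums K" for x
  proof (cases "x = 0")
    case True
    have "\<exists>(m::nat) (f::nat \<Rightarrow> complex). (\<forall>i<m. f i \<in> K) \<and> (\<Sum>i<m. nrm bs (f i)) = x"
      using True by (intro exI[of _ 0]) simp
    thus ?thesis by (rule mem)
  next
    case False
    show ?thesis
    proof (cases "x > 0")
      case True
      have "nrm bs (of_rat 1) = 1" using nrm_rat[OF sfK bas, of 1] by simp
      hence "nrm bs 1 * x = x" by simp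
      moreover have "(1::complex) \<in> K" using sf_basic(2)[OF sfK] .
      ultimately show ?thesis using pos_mult_sum[OF sfK bas _ n0 True] mem by metis
    next
      case f2: False
      hence "x < 0" using False by simp
      hence "x / nrm bs a0 > 0" using a0(2) by (simp add: divide_neg_neg)
      from pos_mult_sum[OF sfK bas a0(1) n0 this]
      have "\<exists>(m::nat) (f::nat \<Rightarrow> complex). (\<forall>i<m. f i \<in> K) \<and> (\<Sum>i<m. nrm bs (f i)) = x" using a0(2) by simp
      thus ?thesis by (rule mem)
    qed
  qed
  thus ?thesis by auto
qed

end
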